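(* Let $M,N\ge1$, let $T_1,\dots,T_N\in\mathcal{L}(\ell^\infty_M,\mathbb{R})$, let $\mathscr{T}=\{T_n:1\le n\le N\}$, and let $A:\ell^\infty_M\to\ell^\infty_N$ be given by $Ax=(T_nx)_{n=1}^N$. Then $\mathcal{R}(\mathscr{T})=C_2(A)$ and $\mathcal{R}^\gamma(\mathscr{T})=C_2^\gamma(A)$.
   Context: $(r_n)$ is a Rademacher sequence and $(\gamma_n)$ a sequence of independent standard Gaussians. For a family $\mathscr{T}\subseteq\mathcal{L}(X,Y)$, the $R$-bound $\mathcal{R}(\mathscr{T})$ is the least $C$ such that $(\mathbb{E}\|\sum_{n=1}^k r_nS_nx_n\|^2)^{1/2}\le C(\mathbb{E}\|\sum_{n=1}^k r_nx_n\|^2)^{1/2}$ for all $k$, all $S_1,\dots,S_k\in\mathscr{T}$ (not necessarily distinct) and all $x_1,\dots,x_k\in X$; the $\gamma$-bound $\mathcal{R}^\gamma(\mathscr{T})$ is defined in the same way with Gaussians. For an operator $A\in\mathcal{L}(X,Y)$, $C_2(A)$ (Rademacher cotype 2 constant) is the least $C$ such that $(\sum_{n=1}^k\|Ax_n\|^2)^{1/2}\le C\|\sum_{n=1}^k r_nx_n\|_{L^2(\Omega;X)}$ for all $k$ and $x_1,\dots,x_k\in X$; $C_2^\gamma(A)$ is defined identically with $(\gamma_n)$ in place of $(r_n)$. *)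

theory Defs
  imports "HOL-Probability.Probability"
begin

definition rad_avg :: "nat \<Rightarrow> ((nat \<Rightarrow> real) \<Rightarrow> real) \<Rightarrow> real" where
  "rad_avg k f = (\<Sum>\<epsilon>\<in>PiE {..<k} (\<lambda>_. {-1, 1::real}). f \<epsilon>) / 2 ^ k"

definition gauss_avg :: "nat \<Rightarrow> ((nat \<Rightarrow> real) \<Rightarrow> real) \<Rightarrow> real" where
  "gauss_avg k f = integral\<^sup>L (PiM {..<k} (\<lambda>_. density lborel std_normal_density)) f"

definition supnorm :: "real ^ 'i::finite \<Rightarrow> real" where
  "supnorm x = Max (range (\<lambda>i. \<bar>x $ i\<bar>))"

text \<open>R-bound (avg = rad_avg) or gamma-bound (avg = gauss_avg) of a family of operators,
  w.r.t. norms nX on X and nY on Y: the least admissible constant.\<close>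
definition R_bound ::
  "(nat \<Rightarrow> ((nat \<Rightarrow> real) \<Rightarrow> real) \<Rightarrow> real) \<Rightarrow> ('x::real_vector \<Rightarrow> real) \<Rightarrow>
   ('y::real_vector \<Rightarrow> real) \<Rightarrow> ('x \<Rightarrow> 'y) set \<Rightarrow> real" where
  "R_bound avg nX nY \<T> = Inf {C. 0 \<le> C \<and>
     (\<forall>k (S :: nat \<Rightarrow> 'x \<Rightarrow> 'y) (x :: nat \<Rightarrow> 'x). (\<forall>j<k. S j \<in> \<T>) \<longrightarrow>
        sqrt (avg k (\<lambda>\<epsilon>. (nY (\<Sum>j<k. \<epsilon> j *\<^sub>R S j (x j)))\<^sup>2))
        \<le> C * sqrt (avg k (\<lambda>\<epsilon>. (nX (\<Sum>j<k. \<epsilon> j *\<^sub>R x j))\<^sup>2)))}"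

definition cotype2_const ::
  "(nat \<Rightarrow> ((nat \<Rightarrow> real) \<Rightarrow> real) \<Rightarrow> real) \<Rightarrow> ('x::real_vector \<Rightarrow> real) \<Rightarrow>
   ('y::real_vector \<Rightarrow> real) \<Rightarrow> ('x \<Rightarrow> 'y) \<Rightarrow> real" where
  "cotype2_const avg nX nY A = Inf {C. 0 \<le> C \<and>
     (\<forall>k (x :: nat \<Rightarrow> 'x).
        sqrt (\<Sum>j<k. (nY (A (x j)))\<^sup>2)
        \<le> C * sqrt (avg k (\<lambda>\<epsilon>. (nX (\<Sum>j<k. \<epsilon> j *\<^sub>R x j))\<^sup>2)))}"

end

theory Submission
  imports Defs
begin


lemma supnorm_attained:
  fixes T :: "'n::finite \<Rightarrow> 'a \<Rightarrow> real"
  shows "\<exists>n. supnorm (\<chi> n. T n y) = \<bar>T n y\<bar>"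
proof -
  have "Max (range (\<lambda>n. \<bar>T n y\<bar>)) \<in> range (\<lambda>n. \<bar>T n y\<bar>)"
    by (rule Max_in) auto
  then obtain n where "Max (range (\<lambda>n. \<bar>T n y\<bar>)) = \<bar>T n y\<bar>" by blast
  then show ?thesis unfolding supnorm_def by auto
qed

lemma supnorm_ge:
  fixes T :: "'n::finite \<Rightarrow> 'a \<Rightarrow> real"
  shows "\<bar>T n y\<bar> \<le> supnorm (\<chi> n. T n y)"
  unfolding supnorm_def by (rule Max_ge) auto

lemma key:
  fixes T :: "'n::finite \<Rightarrow> real ^ 'm::finite \<Rightarrow> real"
  assumes avg_id: "\<And>k a. avg k (\<lambda>\<epsilon>. (\<Sum>j<k. \<epsilon> j * a j)\<^sup>2) = (\<Sum>j<k. (a j)\<^sup>2)"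
  shows "R_bound avg supnorm abs (range T) = cotype2_const avg supnorm supnorm (\<lambda>x. \<chi> n. T n x)"
proof -
  have L: "sqrt (avg k (\<lambda>\<epsilon>. (\<bar>\<Sum>j<k. \<epsilon> j *\<^sub>R S j (x j)\<bar>)\<^sup>2)) = sqrt (\<Sum>j<k. (S j (x j))\<^sup>2)"
    for k and S :: "nat \<Rightarrow> real ^ 'm \<Rightarrow> real" and x :: "nat \<Rightarrow> real ^ 'm"
    using avg_id[of k "\<lambda>j. S j (x j)"] by simp
  define B where "B k x = sqrt (avg k (\<lambda>\<epsilon>. (supnorm (\<Sum>j<k. \<epsilon> j *\<^sub>R x j))\<^sup>2))"
    for k and x :: "nat \<Rightarrow> real ^ 'm"
  have "(\<forall>(k::nat) (S :: nat \<Rightarrow> real ^ 'm \<Rightarrow> real) x. (\<forall>j<k. S j \<in> range T) \<longrightarrow>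
          sqrt (\<Sum>j<k. (S j (x j))\<^sup>2) \<le> C * B k x)
     \<longleftrightarrow> (\<forall>(k::nat) x. sqrt (\<Sum>j<k. (supnorm (\<chi> n. T n (x j)))\<^sup>2) \<le> C * B k x)" for C
  proof
    assume P: "\<forall>(k::nat) (S :: nat \<Rightarrow> real ^ 'm \<Rightarrow> real) x. (\<forall>j<k. S j \<in> range T) \<longrightarrow>
          sqrt (\<Sum>j<k. (S j (x j))\<^sup>2) \<le> C * B k x"
    show "\<forall>(k::nat) x. sqrt (\<Sum>j<k. (supnorm (\<chi> n. T n (x j)))\<^sup>2) \<le> C * B k x"
    proof (intro allI)
      fix k :: nat and x
      define ns where "ns y = (SOME n. supnorm (\<chi> n. T n y) = \<bar>T n y\<bar>)" for y
      have ns: "supnorm (\<chi> n. T n y) = \<bar>T (ns y) y\<bar>" for y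
        unfolding ns_def by (rule someI_ex[OF supnorm_attained])
      have "(\<Sum>j<k. (supnorm (\<chi> n. T n (x j)))\<^sup>2) = (\<Sum>j<k. (T (ns (x j)) (x j))\<^sup>2)"
        by (simp add: ns)
      moreover have "sqrt (\<Sum>j<k. (T (ns (x j)) (x j))\<^sup>2) \<le> C * B k x"
        using P[rule_format, of k "\<lambda>j. T (ns (x j))" x] by auto
      ultimately show "sqrt (\<Sum>j<k. (supnorm (\<chi> n. T n (x j)))\<^sup>2) \<le> C * B k x" by simp
    qed
  next
    assume Q: "\<forall>(k::nat) x. sqrt (\<Sum>j<k. (supnorm (\<chi> n. T n (x j)))\<^sup>2) \<le> C * B k x"
    show "\<forall>(k::nat) (S :: nat \<Rightarrow> real ^ 'm \<Rightarrow> real) x. (\<forall>j<k. S j \<in> range T) \<longrightarrow>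
          sqrt (\<Sum>j<k. (S j (x j))\<^sup>2) \<le> C * B k x"
    proof (intro allI impI)
      fix k :: nat and S :: "nat \<Rightarrow> real ^ 'm \<Rightarrow> real" and x
      assume S: "\<forall>j<k. S j \<in> range T"
      have "(S j (x j))\<^sup>2 \<le> (supnorm (\<chi> n. T n (x j)))\<^sup>2" if "j < k" for j
      proof -
        from S that obtain n where "S j = T n" by auto
        then have "\<bar>S j (x j)\<bar> \<le> supnorm (\<chi> n. T n (x j))" using supnorm_ge by metis
        then show ?thesis by (metis abs_ge_zero power2_abs power_mono)
      qed
      then have "sqrt (\<Sum>j<k. (S j (x j))\<^sup>2) \<le> sqrt (\<Sum>j<k. (supnorm (\<chi> n. T n (x j)))\<^sup>2)"
        by (intro real_sqrt_le_mono sum_mono) auto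
      also have "\<dots> \<le> C * B k x" using Q by blast
      finally show "sqrt (\<Sum>j<k. (S j (x j))\<^sup>2) \<le> C * B k x" .
    qed
  qed
  then show ?thesis
    unfolding R_bound_def cotype2_const_def L B_def[symmetric] by simp
qed



definition cc :: "nat \<Rightarrow> nat \<Rightarrow> nat \<Rightarrow> nat" where
  "cc i j l = (if l = i then 1 else 0) + (if l = j then 1 else 0)"

lemma prod_cc:
  fixes e :: "nat \<Rightarrow> real"
  assumes "i < k" "j < k"
  shows "(\<Prod>l<k. e l ^ cc i j l) = e i * e j"
proof -
  have "(\<Prod>l<k. e l ^ cc i j l) = (\<Prod>l\<in>{i,j}. e l ^ cc i j l)"
    using assms by (intro prod.mono_neutral_right) (auto simp: cc_def)
  then show ?thesis
    by (cases "i = j") (auto simp: cc_def power2_eq_square)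
qed

lemma prod_m_cc:
  fixes m :: "nat \<Rightarrow> real"
  assumes "m 0 = 1" "m 1 = 0" "m 2 = 1" "i < k" "j < k"
  shows "(\<Prod>l<k. m (cc i j l)) = (if i = j then 1 else 0)"
proof -
  have "(\<Prod>l<k. m (cc i j l)) = (\<Prod>l\<in>{i,j}. m (cc i j l))"
    using assms by (intro prod.mono_neutral_right) (auto simp: cc_def)
  then show ?thesis
    using assms by (cases "i = j") (auto simp: cc_def numeral_2_eq_2)
qed

lemma sq_expand:
  fixes e a :: "nat \<Rightarrow> real"
  shows "(\<Sum>j<k. e j * a j)\<^sup>2 = (\<Sum>i<k. \<Sum>j<k. a i * a j * (\<Prod>l<k. e l ^ cc i j l))"
proof -
  have "(\<Sum>j<k. e j * a j)\<^sup>2 = (\<Sum>i<k. \<Sum>j<k. a i * a j * (e i * e j))"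
    by (simp add: power2_eq_square sum_product algebra_simps)
  also have "\<dots> = (\<Sum>i<k. \<Sum>j<k. a i * a j * (\<Prod>l<k. e l ^ cc i j l))"
    by (intro sum.cong refl) (simp add: prod_cc)
  finally show ?thesis .
qed

lemma diag_sum:
  fixes a :: "nat \<Rightarrow> real"
  shows "(\<Sum>i<k. \<Sum>j<k. a i * a j * (if i = j then 1 else 0)) = (\<Sum>j<k. (a j)\<^sup>2)"
  by (simp add: power2_eq_square if_distrib cong: if_cong)

lemma rad_id: "rad_avg k (\<lambda>\<epsilon>. (\<Sum>j<k. \<epsilon> j * a j)\<^sup>2) = (\<Sum>j<k. (a j)\<^sup>2)"
proof -
  define mr :: "nat \<Rightarrow> real" where "mr c = (\<Sum>y\<in>{-1,1::real}. y ^ c) / 2" for c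
  have one: "(\<Sum>\<epsilon>\<in>PiE {..<k} (\<lambda>_. {-1, 1::real}). \<Prod>l<k. \<epsilon> l ^ cc i j l)
      = 2 ^ k * (if i = j then 1 else 0)" if "i < k" "j < k" for i j
  proof -
    have "(\<Sum>\<epsilon>\<in>PiE {..<k} (\<lambda>_. {-1, 1::real}). \<Prod>l<k. \<epsilon> l ^ cc i j l)
        = (\<Prod>l<k. \<Sum>y\<in>{-1,1::real}. y ^ cc i j l)"
      by (rule prod_sum_PiE[symmetric]) auto
    also have "\<dots> = (\<Prod>l<k. 2 * mr (cc i j l))" by (intro prod.cong) (auto simp: mr_def)
    also have "\<dots> = 2 ^ k * (\<Prod>l<k. mr (cc i j l))" by (simp add: prod.distrib)
    also have "(\<Prod>l<k. mr (cc i j l)) = (if i = j then 1 else 0)"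
      using that by (intro prod_m_cc) (auto simp: mr_def)
    finally show ?thesis .
  qed
  have "rad_avg k (\<lambda>\<epsilon>. (\<Sum>j<k. \<epsilon> j * a j)\<^sup>2)
      = (\<Sum>i<k. \<Sum>j<k. a i * a j * ((\<Sum>\<epsilon>\<in>PiE {..<k} (\<lambda>_. {-1, 1::real}). \<Prod>l<k. \<epsilon> l ^ cc i j l) / 2 ^ k))"
    unfolding rad_avg_def sq_expand
    by (simp add: sum_distrib_left sum_divide_distrib sum.swap[of _ "PiE _ _"] mult.assoc)
  also have "\<dots> = (\<Sum>i<k. \<Sum>j<k. a i * a j * (if i = j then 1 else 0))"
    by (intro sum.cong refl) (simp add: one)
  finally show ?thesis by (simp add: diag_sum)
qed

lemma gauss_id: "gauss_avg k (\<lambda>\<epsilon>. (\<Sum>j<k. \<epsilon> j * a j)\<^sup>2) = (\<Sum>j<k. (a j)\<^sup>2)"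
proof -
  define G where "G = density lborel std_normal_density"
  interpret G: prob_space G unfolding G_def by (rule prob_space_normal_density) simp
  interpret PP: product_prob_space "\<lambda>_. G" "{..<k}"
    by unfold_locales
  define mg where "mg c = integral\<^sup>L G (\<lambda>t. t ^ c)" for c
  have dens: "integral\<^sup>L G f = integral\<^sup>L lborel (\<lambda>x. std_normal_density x * f x)"
    if "f \<in> borel_measurable borel" for f :: "real \<Rightarrow> real"
    unfolding G_def using that by (subst integral_density) (auto simp: normal_density_nonneg)
  have intg: "integrable G (\<lambda>t. t ^ c)" for c
    unfolding G_def by (subst integrable_density) (auto simp: normal_density_nonneg integrable_std_normal_moment)
  have m0: "mg 0 = 1" unfolding mg_def by (simp add: G.prob_space)
  have m1: "mg 1 = 0" unfolding mg_def using integral_std_normal_moment_odd[of 0]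
    by (subst dens) auto
  have m2: "mg 2 = 1" unfolding mg_def using integral_std_normal_moment_even[of 1]
    by (subst dens) auto
  have intP: "integrable (PiM {..<k} (\<lambda>_. G)) (\<lambda>x. \<Prod>l<k. x l ^ cc i j l)" for i j
    by (rule PP.product_integrable_prod) (auto intro: intg)
  have one: "integral\<^sup>L (PiM {..<k} (\<lambda>_. G)) (\<lambda>x. \<Prod>l<k. x l ^ cc i j l) = (if i = j then 1 else 0)"
    if "i < k" "j < k" for i j
  proof -
    have "integral\<^sup>L (PiM {..<k} (\<lambda>_. G)) (\<lambda>x. \<Prod>l<k. x l ^ cc i j l) = (\<Prod>l<k. mg (cc i j l))"
      unfolding mg_def by (rule PP.product_integral_prod) (auto intro: intg)
    also have "\<dots> = (if i = j then 1 else 0)"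
      using that m0 m1 m2 by (intro prod_m_cc) auto
    finally show ?thesis .
  qed
  have "gauss_avg k (\<lambda>\<epsilon>. (\<Sum>j<k. \<epsilon> j * a j)\<^sup>2)
     = (\<Sum>i<k. \<Sum>j<k. a i * a j * integral\<^sup>L (PiM {..<k} (\<lambda>_. G)) (\<lambda>x. \<Prod>l<k. x l ^ cc i j l))"
    unfolding gauss_avg_def sq_expand G_def[symmetric]
    using intP by (simp add: integral_sum integrable_sum)
  also have "\<dots> = (\<Sum>i<k. \<Sum>j<k. a i * a j * (if i = j then 1 else 0))"
    by (intro sum.cong refl) (simp add: one)
  finally show ?thesis by (simp add: diag_sum)
qed


theorem mainTheorem3:
  fixes T :: "'n::finite \<Rightarrow> real ^ 'm::finite \<Rightarrow> real"
  assumes "\<And>n. linear (T n)"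
  shows "R_bound rad_avg supnorm abs (range T)
           = cotype2_const rad_avg supnorm supnorm (\<lambda>x. \<chi> n. T n x)
       \<and> R_bound gauss_avg supnorm abs (range T)
           = cotype2_const gauss_avg supnorm supnorm (\<lambda>x. \<chi> n. T n x)"
  using key[of rad_avg T, OF rad_id] key[of gauss_avg T, OF gauss_id] by simp

end
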